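(* Let $A_0,A_1,\dots,A_k\in\mathbb{C}^{n\times n}$ be pairwise commuting normal matrices. Then \[ \max_{v\in\mathbb{C}^n,\ \|v\|=1}\ \min_{\alpha_1,\dots,\alpha_k\in\mathbb{C}}\Big\|A_0v-\sum_{i=1}^k\alpha_iA_iv\Big\| \;=\; \min_{\alpha_1,\dots,\alpha_k\in\mathbb{C}}\Big\|A_0-\sum_{i=1}^k\alpha_iA_i\Big\|, \] where $\|\cdot\|$ denotes the Euclidean vector norm and the induced spectral matrix norm. *)

theory Defs
  imports "HOL-Analysis.Analysis"
begin

definition cadjoint :: "complex ^'n ^'m \<Rightarrow> complex ^'m ^'n" where
  "cadjoint A = (\<chi> i j. cnj (A $ j $ i))"

definition normal_matrix :: "complex ^'n ^'n \<Rightarrow> bool" where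
  "normal_matrix A \<longleftrightarrow> A ** cadjoint A = cadjoint A ** A"

definition spec_norm :: "complex ^'n ^'m \<Rightarrow> real" where
  "spec_norm A = onorm (\<lambda>v. A *v v)"

end

theory Submission imports Defs "HOL-Computational_Algebra.Fundamental_Theorem_Algebra" begin

definition cinner :: "complex^'n \<Rightarrow> complex^'n \<Rightarrow> complex" where
  "cinner x y = (\<Sum>j\<in>UNIV. cnj (x$j) * y$j)"

lemma cinner_add_right: "cinner x (y+z) = cinner x y + cinner x z"
  by (simp add: cinner_def distrib_left sum.distrib)
lemma cinner_diff_right: "cinner x (y-z) = cinner x y - cinner x z"
  by (simp add: cinner_def right_diff_distrib sum_subtractf)
lemma cinner_scale_right: "cinner x (c *s y) = c * cinner x y"
  by (simp add: cinner_def sum_distrib_left mult.left_commute)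
lemma cinner_scale_left: "cinner (c *s x) y = cnj c * cinner x y"
  by (simp add: cinner_def sum_distrib_left mult.assoc)
lemma cinner_sum_right: "cinner x (sum f S) = (\<Sum>i\<in>S. cinner x (f i))"
  unfolding cinner_def sum_component sum_distrib_left by (rule sum.swap)
lemma cinner_sum_left: "cinner (sum f S) y = (\<Sum>i\<in>S. cinner (f i) y)"
  unfolding cinner_def sum_component cnj_sum sum_distrib_right by (rule sum.swap)
lemma cinner_commute: "cinner y x = cnj (cinner x y)"
  by (simp add: cinner_def mult.commute)
lemma cinner_zero_right[simp]: "cinner x 0 = 0" by (simp add: cinner_def)
lemma cinner_zero_left[simp]: "cinner 0 x = 0" by (simp add: cinner_def)

lemma Re_cinner: "Re (cinner x y) = inner x y"
  by (simp add: cinner_def inner_vec_def inner_complex_def Re_sum)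

lemma cinner_self: "cinner x x = complex_of_real ((norm x)^2)"
proof -
  have "Im (cinner x x) = 0" by (simp add: cinner_def Im_sum)
  moreover have "Re (cinner x x) = (norm x)^2" by (simp add: Re_cinner power2_norm_eq_inner)
  ultimately show ?thesis by (simp add: complex_eq_iff)
qed

lemma cinner_self_eq0: "cinner x x = 0 \<longleftrightarrow> x = 0"
  by (simp add: cinner_self)

lemma cinner_adjoint: "cinner x (A *v y) = cinner (cadjoint A *v x) y"
proof -
  have "cinner x (A *v y) = (\<Sum>j\<in>UNIV. \<Sum>r\<in>UNIV. cnj (x$j) * (A$j$r * y$r))"
    unfolding cinner_def matrix_vector_mult_def by (simp add: sum_distrib_left)
  also have "\<dots> = (\<Sum>r\<in>UNIV. \<Sum>j\<in>UNIV. cnj (x$j) * (A$j$r * y$r))"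
    by (rule sum.swap)
  also have "\<dots> = cinner (cadjoint A *v x) y"
    unfolding cinner_def matrix_vector_mult_def cadjoint_def
    by (simp add: sum_distrib_right sum_distrib_left cnj_sum mult_ac)
  finally show ?thesis .
qed

lemma cadjoint_cadjoint[simp]: "cadjoint (cadjoint A) = A"
  by (simp add: cadjoint_def vec_eq_iff)

lemma cinner_adjoint': "cinner (A *v x) y = cinner x (cadjoint A *v y)"
  by (metis cadjoint_cadjoint cinner_adjoint)

lemma cinner_diff_left: "cinner (x - y) z = cinner x z - cinner y z"
  by (simp add: cinner_def left_diff_distrib sum_subtractf)
lemma cinner_add_left: "cinner (x + y) z = cinner x z + cinner y z"
  by (simp add: cinner_def distrib_right sum.distrib)

lemma mv_scale: "A *v (c *s x) = c *s (A *v (x::complex^'n))"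
  by (auto simp: vec_eq_iff matrix_vector_mult_def sum_distrib_left mult_ac intro!: sum.cong)

lemma mv_sum: "A *v (sum f S) = (\<Sum>i\<in>S. A *v f i)"
proof (cases "finite S")
  case True then show ?thesis
    by (induction S rule: finite_induct) (auto simp: matrix_vector_right_distrib)
qed simp

lemma scale_sum: "(c::complex) *s sum f S = (\<Sum>i\<in>S. c *s f i)"
  by (simp add: vec_eq_iff sum_component sum_distrib_left)

lemma mat_mv: "mat c *v x = (c::complex) *s x"
proof -
  have "(\<Sum>j\<in>UNIV. (if i = j then c else 0) * x $ j) = (\<Sum>j\<in>UNIV. if j = i then c * x$j else 0)" for i
    by (rule sum.cong) auto
  then show ?thesis by (simp add: vec_eq_iff matrix_vector_mult_def mat_def)
qed

lemma normal_eig_adj: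
  assumes N: "normal_matrix A" and E: "A *v u = l *s u"
  shows "cadjoint A *v u = cnj l *s u"
proof -
  let ?B = "cadjoint A"
  have P1: "cinner (?B *v u) (?B *v u) = cnj l * l * cinner u u"
  proof -
    have "cinner (?B *v u) (?B *v u) = cinner u (A *v (?B *v u))"
      using cinner_adjoint'[of ?B u] by simp
    also have "\<dots> = cinner u ((A ** ?B) *v u)" by (simp add: matrix_vector_mul_assoc)
    also have "\<dots> = cinner u ((?B ** A) *v u)" using N by (simp add: normal_matrix_def)
    also have "\<dots> = cinner u (?B *v (A *v u))" by (simp add: matrix_vector_mul_assoc)
    also have "\<dots> = cinner (A *v u) (A *v u)" by (simp add: cinner_adjoint')
    finally show ?thesis by (simp add: E cinner_scale_left cinner_scale_right)
  qed
  have P2: "cinner (?B *v u) u = l * cinner u u"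
    using cinner_adjoint'[of ?B u u] by (simp add: E cinner_scale_right)
  have P3: "cinner u (?B *v u) = cnj l * cinner u u"
    using cinner_adjoint'[of A u u] by (simp add: E cinner_scale_left)
  have "cinner (?B *v u - cnj l *s u) (?B *v u - cnj l *s u) = 0"
    by (simp add: cinner_diff_left cinner_diff_right cinner_scale_left cinner_scale_right P1 P2 P3
        algebra_simps)
  then show ?thesis by (simp add: cinner_self_eq0)
qed

definition csub :: "(complex^'n) set \<Rightarrow> bool" where
  "csub W \<longleftrightarrow> 0 \<in> W \<and> (\<forall>x\<in>W. \<forall>y\<in>W. x + y \<in> W) \<and> (\<forall>c. \<forall>x\<in>W. c *s x \<in> W)"

lemma csub_sum: assumes "csub W" "\<And>i. i \<in> S \<Longrightarrow> f i \<in> W" shows "sum f S \<in> W"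
proof (cases "finite S")
  case True then show ?thesis using assms
    by (induction S rule: finite_induct) (auto simp: csub_def)
qed (use assms in \<open>simp add: csub_def\<close>)

definition peval :: "complex^'n^'n \<Rightarrow> complex poly \<Rightarrow> complex^'n \<Rightarrow> complex^'n" where
  "peval A p x = (\<Sum>k\<le>degree p. coeff p k *s (((*v) A) ^^ k) x)"

lemma peval_bound: assumes "degree p \<le> N"
  shows "peval A p x = (\<Sum>k\<le>N. coeff p k *s (((*v) A) ^^ k) x)"
  unfolding peval_def
  by (rule sum.mono_neutral_left) (use assms in \<open>auto simp: coeff_eq_0\<close>)

lemma peval_lin: "peval A ([:-c,1:] * q) x = A *v peval A q x - c *s peval A q x"
proof -
  let ?F = "(*v) A"
  let ?d = "degree q"
  have eq: "[:-c,1:] * q = smult (-c) q + pCons 0 q" by simp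
  have deg: "degree ([:-c,1:] * q) \<le> Suc ?d"
    using degree_mult_le[of "[:-c,1:]" q] by simp
  have "peval A ([:-c,1:] * q) x = (\<Sum>k\<le>Suc ?d. coeff ([:-c,1:] * q) k *s (?F ^^ k) x)"
    by (rule peval_bound[OF deg])
  also have "\<dots> = (\<Sum>k\<le>Suc ?d. (-c) *s (coeff q k *s (?F ^^ k) x))
       + (\<Sum>k\<le>Suc ?d. coeff (pCons 0 q) k *s (?F ^^ k) x)"
    unfolding sum.distrib[symmetric]
    by (rule sum.cong) (simp_all add: eq vector_sadd_rdistrib vector_smult_assoc)
  also have "(\<Sum>k\<le>Suc ?d. (-c) *s (coeff q k *s (?F ^^ k) x)) = (-c) *s peval A q x"
    by (simp add: scale_sum peval_bound[of q "Suc ?d"])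
  also have "(\<Sum>k\<le>Suc ?d. coeff (pCons 0 q) k *s (?F ^^ k) x) = A *v peval A q x"
    by (simp add: sum.atMost_Suc_shift del: sum.atMost_Suc) (simp add: peval_def mv_sum mv_scale)
  finally show ?thesis by (simp add: algebra_simps)
qed

lemma pow_in_W: assumes "csub W" "\<forall>x\<in>W. A *v x \<in> W" "x \<in> W" shows "(((*v) A) ^^ k) x \<in> W"
  using assms by (induction k) auto

lemma peval_W: assumes "csub W" "\<forall>x\<in>W. A *v x \<in> W" "x \<in> W" shows "peval A p x \<in> W"
  unfolding peval_def
  by (rule csub_sum[OF assms(1)]) (use assms(1) pow_in_W[OF assms] in \<open>unfold csub_def, blast\<close>)

lemma eig_from_poly:
  assumes W: "csub W" and inv: "\<forall>x\<in>W. A *v x \<in> W"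
  shows "p \<noteq> 0 \<Longrightarrow> x \<in> W \<Longrightarrow> x \<noteq> 0 \<Longrightarrow> peval A p x = 0 \<Longrightarrow> \<exists>v\<in>W. v \<noteq> 0 \<and> (\<exists>l. A *v v = l *s v)"
proof (induction "degree p" arbitrary: p rule: less_induct)
  case less
  show ?case
  proof (cases "degree p = 0")
    case True
    then have "peval A p x = coeff p 0 *s x" by (simp add: peval_def)
    moreover have "coeff p 0 \<noteq> 0" using True less.prems(1) leading_coeff_0_iff[of p] by simp
    ultimately show ?thesis using less.prems by simp
  next
    case False
    then have "\<not> constant (poly p)" by (simp add: constant_degree)
    then obtain c where c: "poly p c = 0" using fundamental_theorem_of_algebra by blast
    define q where "q = synthetic_div p c"
    have pq: "p = [:-c,1:] * q" using synthetic_div_correct'[of c p] c by (simp add: q_def)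
    have q0: "q \<noteq> 0" using pq less.prems(1) by auto
    have dq: "degree q < degree p" using False by (simp add: q_def degree_synthetic_div)
    define y where "y = peval A q x"
    have yW: "y \<in> W" using peval_W[OF W inv less.prems(2)] by (simp add: y_def)
    have "A *v y - c *s y = 0" using less.prems(4) peval_lin[of A c q x] unfolding y_def pq[symmetric] by simp
    then have ey: "A *v y = c *s y" by (metis eq_iff_diff_eq_0)
    show ?thesis
    proof (cases "y = 0")
      case True
      then show ?thesis using less.hyps[OF dq q0 less.prems(2,3)] by (simp add: y_def)
    next
      case False then show ?thesis using yW ey by blast
    qed
  qed
qed

lemma scaleR_smult: "r *\<^sub>R (x::complex^'n) = complex_of_real r *s x"
  by (auto simp: vec_eq_iff complex_eq_iff)

lemma eig_exists:
  fixes A :: "complex^'n^'n"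
  assumes W: "csub W" and inv: "\<forall>x\<in>W. A *v x \<in> W" and x0: "x0 \<in> W" "x0 \<noteq> 0"
  shows "\<exists>v\<in>W. v \<noteq> 0 \<and> (\<exists>l. A *v v = l *s v)"
proof -
  define N where "N = DIM(complex^'n)"
  define f where "f k = (((*v) A) ^^ k) x0" for k
  have "\<exists>c. (\<exists>k\<le>N. c k \<noteq> 0) \<and> (\<Sum>k\<le>N. c k *s f k) = 0"
  proof (cases "inj_on f {..N}")
    case True
    let ?S = "f ` {..N}"
    have cS: "card ?S = Suc N" using True by (simp add: card_image)
    have "real_vector.dependent ?S" using independent_bound[of ?S] cS by (auto simp: N_def)
    then obtain u where u: "\<exists>v\<in>?S. u v \<noteq> 0" "(\<Sum>v\<in>?S. u v *\<^sub>R v) = 0"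
      using real_vector.dependent_finite[of ?S] by auto
    define c where "c k = complex_of_real (u (f k))" for k
    have "(\<Sum>k\<le>N. c k *s f k) = (\<Sum>v\<in>?S. u v *\<^sub>R v)"
      by (simp add: sum.reindex[OF True] c_def scaleR_smult)
    moreover have "\<exists>k\<le>N. c k \<noteq> 0" using u(1) by (auto simp: c_def)
    ultimately show ?thesis using u(2) by auto
  next
    case False
    then obtain a b where ab: "a \<le> N" "b \<le> N" "a \<noteq> b" "f a = f b" by (auto simp: inj_on_def)
    define c where "c k = (if k = a then 1 else if k = b then -1 else (0::complex))" for k
    have "(\<Sum>k\<le>N. c k *s f k) = (\<Sum>k\<le>N. if k = a then f a else 0) - (\<Sum>k\<le>N. if k = b then f b else 0)"
      unfolding sum_subtractf[symmetric] by (rule sum.cong) (use ab in \<open>auto simp: c_def\<close>)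
    also have "\<dots> = 0" using ab by simp
    finally show ?thesis using ab by (auto simp: c_def intro!: exI[of _ c])
  qed
  then obtain c where c: "\<exists>k\<le>N. c k \<noteq> 0" "(\<Sum>k\<le>N. c k *s f k) = 0" by blast
  define p where "p = (\<Sum>k\<le>N. monom (c k) k)"
  have cp: "coeff p k = (if k \<le> N then c k else 0)" for k
    by (simp add: p_def coeff_sum coeff_monom)
  have dp: "degree p \<le> N" by (rule degree_le) (simp add: cp)
  have p0: "p \<noteq> 0" using c(1) cp by (metis coeff_0)
  have "peval A p x0 = (\<Sum>k\<le>N. c k *s f k)"
    unfolding peval_bound[OF dp] by (rule sum.cong) (simp_all add: cp f_def)
  then have "peval A p x0 = 0" using c(2) by simp
  then show ?thesis using eig_from_poly[OF W inv p0 x0] by blast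
qed

lemma common_eig:
  fixes A :: "nat \<Rightarrow> complex^'n^'n" and m :: nat
  assumes cm: "\<And>i j. i < M \<Longrightarrow> j < M \<Longrightarrow> A i ** A j = A j ** A i"
  shows "m \<le> M \<Longrightarrow> csub W \<Longrightarrow> (\<forall>i<m. \<forall>x\<in>W. A i *v x \<in> W) \<Longrightarrow> x0 \<in> W \<Longrightarrow> x0 \<noteq> 0 \<Longrightarrow>
    \<exists>v\<in>W. v \<noteq> 0 \<and> (\<forall>i<m. \<exists>l. A i *v v = l *s v)"
proof (induction m arbitrary: W x0)
  case 0 then show ?case by auto
next
  case (Suc m)
  obtain v0 l where v0: "v0 \<in> W" "v0 \<noteq> 0" "A m *v v0 = l *s v0"
    using eig_exists[OF Suc.prems(2) _ Suc.prems(4,5), of "A m"] Suc.prems(3) by auto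
  define W' where "W' = {x\<in>W. A m *v x = l *s x}"
  have cW': "csub W'" using Suc.prems(2)
    by (auto simp: csub_def W'_def matrix_vector_right_distrib mv_scale vector_add_ldistrib
        vector_smult_assoc mult.commute)
  have inv': "\<forall>i<m. \<forall>x\<in>W'. A i *v x \<in> W'"
  proof (intro allI impI ballI)
    fix i x assume i: "i < m" and x: "x \<in> W'"
    have "A m *v (A i *v x) = A i *v (A m *v x)"
      using cm[of m i] i Suc.prems(1) by (simp add: matrix_vector_mul_assoc)
    also have "\<dots> = l *s (A i *v x)" using x by (simp add: W'_def mv_scale)
    finally show "A i *v x \<in> W'" using x i Suc.prems(3) by (auto simp: W'_def)
  qed
  obtain v where v: "v \<in> W'" "v \<noteq> 0" "\<forall>i<m. \<exists>l. A i *v v = l *s v"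
    using Suc.IH[OF _ cW' inv', of v0] Suc.prems(1) v0 by (auto simp: W'_def)
  show ?case using v by (auto simp: W'_def less_Suc_eq)
qed

lemma kernel_nonzero:
  fixes R :: "complex^'n^'n"
  assumes "\<forall>r. R $ a $ r = 0"
  shows "\<exists>x. x \<noteq> 0 \<and> R *v x = 0"
proof (rule ccontr)
  assume "\<not> ?thesis"
  then have "\<forall>x. R *v x = 0 \<longrightarrow> x = 0" by auto
  then obtain B where "B ** R = mat 1" using matrix_left_invertible_ker by blast
  then have "R ** B = mat 1" using matrix_left_right_inverse by blast
  then have "(R ** B) $ a $ a = 1" by (simp add: mat_def)
  moreover have "(R ** B) $ a $ a = 0" using assms by (simp add: matrix_matrix_mult_def)
  ultimately show False by simp
qed

lemma perp_exists:
  fixes U :: "'n \<Rightarrow> complex^'n"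
  assumes "a \<notin> S"
  shows "\<exists>x. x \<noteq> 0 \<and> (\<forall>j\<in>S. cinner (U j) x = 0)"
proof -
  define R :: "complex^'n^'n" where "R = (\<chi> j r. if j \<in> S then cnj (U j $ r) else 0)"
  have "\<forall>r. R $ a $ r = 0" using assms by (simp add: R_def)
  then obtain x where x: "x \<noteq> 0" "R *v x = 0" using kernel_nonzero by blast
  have "cinner (U j) x = 0" if "j \<in> S" for j
  proof -
    have "(R *v x) $ j = cinner (U j) x" using that
      by (simp add: R_def matrix_vector_mult_def cinner_def)
    then show ?thesis using x(2) by simp
  qed
  then show ?thesis using x(1) by blast
qed

lemma onb_exists:
  fixes A :: "nat \<Rightarrow> complex^'n^'n" and k :: nat
  assumes normal: "\<And>i. i \<le> k \<Longrightarrow> normal_matrix (A i)"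
    and commute: "\<And>i j. i \<le> k \<Longrightarrow> j \<le> k \<Longrightarrow> A i ** A j = A j ** A i"
  shows "\<exists>U::'n \<Rightarrow> complex^'n. (\<forall>i j. cinner (U i) (U j) = (if i = j then 1 else 0)) \<and>
           (\<forall>j. \<forall>i\<le>k. \<exists>l. A i *v U j = l *s U j)"
proof -
  have "\<exists>U::'n \<Rightarrow> complex^'n. (\<forall>i\<in>S. \<forall>j\<in>S. cinner (U i) (U j) = (if i = j then 1 else 0)) \<and>
           (\<forall>j\<in>S. \<forall>i\<le>k. \<exists>l. A i *v U j = l *s U j)" for S :: "'n set"
  proof (induction S rule: finite_induct[OF finite])
    case 1 then show ?case by auto
  next
    case (2 a S)
    then obtain U where U: "\<forall>i\<in>S. \<forall>j\<in>S. cinner (U i) (U j) = (if i = j then 1 else 0)"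
       "\<forall>j\<in>S. \<forall>i\<le>k. \<exists>l. A i *v U j = l *s U j" by blast
    define W where "W = {x. \<forall>j\<in>S. cinner (U j) x = 0}"
    have cW: "csub W" by (auto simp: csub_def W_def cinner_add_right cinner_scale_right)
    have inv: "\<forall>i<Suc k. \<forall>x\<in>W. A i *v x \<in> W"
    proof (intro allI impI ballI)
      fix i x assume i: "i < Suc k" and x: "x \<in> W"
      have "cinner (U j) (A i *v x) = 0" if j: "j \<in> S" for j
      proof -
        obtain l where l: "A i *v U j = l *s U j" using U(2) j i less_Suc_eq_le by blast
        have "cadjoint (A i) *v U j = cnj l *s U j" using normal_eig_adj[OF normal l] i by simp
        then show ?thesis using x j
          by (simp add: cinner_adjoint cinner_scale_left W_def)
      qed
      then show "A i *v x \<in> W" by (simp add: W_def)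
    qed
    obtain x0 where x0: "x0 \<noteq> 0" "\<forall>j\<in>S. cinner (U j) x0 = 0" using perp_exists[OF 2(2)] by blast
    have cm: "\<And>i j. i < Suc k \<Longrightarrow> j < Suc k \<Longrightarrow> A i ** A j = A j ** A i" using commute by simp
    obtain v where v: "v \<in> W" "v \<noteq> 0" "\<forall>i<Suc k. \<exists>l. A i *v v = l *s v"
      using common_eig[OF cm order.refl cW inv, of x0] x0 by (auto simp: W_def)
    define c where "c = complex_of_real (1 / norm v)"
    define U' where "U' = U(a := c *s v)"
    have nv: "norm v \<noteq> 0" using v(2) by simp
    have "cinner (U' a) (U' a) = cnj c * (c * cinner v v)"
      by (simp add: U'_def cinner_scale_left cinner_scale_right)
    also have "\<dots> = complex_of_real ((1 / norm v) * (1 / norm v) * (norm v * norm v))"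
      by (simp add: c_def cinner_self power2_eq_square)
    also have "\<dots> = 1" using nv by simp
    finally have caa: "cinner (U' a) (U' a) = 1" .
    have cia: "cinner (U i) (c *s v) = 0" "cinner (c *s v) (U i) = 0" if "i \<in> S" for i
    proof -
      show "cinner (U i) (c *s v) = 0" using v(1) that
        by (simp add: cinner_scale_right W_def)
      then show "cinner (c *s v) (U i) = 0" by (metis cinner_commute complex_cnj_zero)
    qed
    have caa': "cinner (c *s v) (c *s v) = 1" using caa by (simp add: U'_def)
    have "\<forall>i\<in>insert a S. \<forall>j\<in>insert a S. cinner (U' i) (U' j) = (if i = j then 1 else 0)"
    proof (intro ballI)
      fix i j assume "i \<in> insert a S" "j \<in> insert a S"
      then show "cinner (U' i) (U' j) = (if i = j then 1 else 0)"
        using caa' cia U(1) 2(2) by (auto simp: U'_def)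
    qed
    moreover have "\<forall>j\<in>insert a S. \<forall>i\<le>k. \<exists>l. A i *v U' j = l *s U' j"
    proof (intro ballI allI impI)
      fix j i assume j: "j \<in> insert a S" and i: "i \<le> k"
      show "\<exists>l. A i *v U' j = l *s U' j"
      proof (cases "j = a")
        case True
        obtain l where "A i *v v = l *s v" using v(3) i less_Suc_eq_le by blast
        then have "A i *v U' j = l *s U' j" using True
          by (simp add: U'_def mv_scale vector_smult_assoc mult.commute)
        then show ?thesis by blast
      next
        case False then show ?thesis using U(2) j i by (simp add: U'_def)
      qed
    qed
    ultimately show ?case by blast
  qed
  from this[of UNIV] show ?thesis by auto
qed

lemma onb_complete:
  fixes U :: "'n \<Rightarrow> complex^'n"
  assumes on: "\<forall>i j. cinner (U i) (U j) = (if i = j then 1 else 0)"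
  shows "x = (\<Sum>j\<in>UNIV. cinner (U j) x *s U j)"
proof -
  define Q :: "complex^'n^'n" where "Q = (\<chi> r j. U j $ r)"
  have "cadjoint Q ** Q = mat 1"
    using on by (simp add: vec_eq_iff matrix_matrix_mult_def cadjoint_def mat_def Q_def cinner_def)
  then have "Q ** cadjoint Q = mat 1" using matrix_left_right_inverse by blast
  then have h: "(\<Sum>j\<in>UNIV. U j $ r * cnj (U j $ s)) = (if r = s then 1 else 0)" for r s
    by (auto simp: vec_eq_iff matrix_matrix_mult_def cadjoint_def mat_def Q_def dest: spec[of _ r])
  have "(\<Sum>j\<in>UNIV. cinner (U j) x *s U j) $ r = x $ r" for r
  proof -
    have "(\<Sum>j\<in>UNIV. cinner (U j) x *s U j) $ r = (\<Sum>j\<in>UNIV. \<Sum>s\<in>UNIV. U j $ r * cnj (U j $ s) * x $ s)"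
      by (simp add: sum_component cinner_def sum_distrib_right sum_distrib_left mult_ac)
    also have "\<dots> = (\<Sum>s\<in>UNIV. \<Sum>j\<in>UNIV. U j $ r * cnj (U j $ s) * x $ s)" by (rule sum.swap)
    also have "\<dots> = (\<Sum>s\<in>UNIV. (if r = s then 1 else 0) * x $ s)"
      by (simp add: sum_distrib_right[symmetric] h)
    also have "\<dots> = (\<Sum>s\<in>UNIV. if s = r then x $ s else 0)" by (rule sum.cong) auto
    also have "\<dots> = x $ r" by simp
    finally show ?thesis .
  qed
  then show ?thesis by (simp add: vec_eq_iff)
qed

lemma parseval:
  fixes U :: "'n \<Rightarrow> complex^'n"
  assumes on: "\<forall>i j. cinner (U i) (U j) = (if i = j then 1 else 0)"
  shows "cinner (U i) (\<Sum>j\<in>UNIV. c j *s U j) = c i"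
    and "(norm (\<Sum>j\<in>UNIV. c j *s U j))^2 = (\<Sum>j\<in>UNIV. (cmod (c j))^2)"
proof -
  show ci: "cinner (U i) (\<Sum>j\<in>UNIV. c j *s U j) = c i" for i
  proof -
    have "cinner (U i) (\<Sum>j\<in>UNIV. c j *s U j) = (\<Sum>j\<in>UNIV. if j = i then c j else 0)"
      unfolding cinner_sum_right cinner_scale_right by (rule sum.cong) (auto simp: on)
    then show ?thesis by simp
  qed
  have "complex_of_real ((norm (\<Sum>j\<in>UNIV. c j *s U j))^2) = cinner (\<Sum>j\<in>UNIV. c j *s U j) (\<Sum>j\<in>UNIV. c j *s U j)"
    by (simp add: cinner_self)
  also have "\<dots> = (\<Sum>i\<in>UNIV. cnj (c i) * c i)"
    by (simp add: cinner_sum_left cinner_scale_left ci)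
  also have "\<dots> = complex_of_real (\<Sum>j\<in>UNIV. (cmod (c j))^2)"
    unfolding of_real_sum by (rule sum.cong[OF refl], metis complex_norm_square mult.commute)
  finally show "(norm (\<Sum>j\<in>UNIV. c j *s U j))^2 = (\<Sum>j\<in>UNIV. (cmod (c j))^2)"
    using of_real_eq_iff by blast
qed

lemma eig_norm:
  fixes U :: "'n \<Rightarrow> complex^'n" and M :: "complex^'n^'n"
  assumes on: "\<forall>i j. cinner (U i) (U j) = (if i = j then 1 else 0)"
    and ev: "\<And>j. M *v U j = m j *s U j"
  shows "(norm (M *v x))^2 = (\<Sum>j\<in>UNIV. (cmod (cinner (U j) x))^2 * (cmod (m j))^2)"
proof -
  have "M *v x = M *v (\<Sum>j\<in>UNIV. cinner (U j) x *s U j)" using onb_complete[OF on] by metis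
  also have "\<dots> = (\<Sum>j\<in>UNIV. (cinner (U j) x * m j) *s U j)"
    by (simp add: mv_sum mv_scale ev vector_smult_assoc)
  finally show ?thesis using parseval(2)[OF on] by (simp add: norm_mult power_mult_distrib)
qed

lemma norm_expand:
  fixes U :: "'n \<Rightarrow> complex^'n"
  assumes on: "\<forall>i j. cinner (U i) (U j) = (if i = j then 1 else 0)"
  shows "(norm x)^2 = (\<Sum>j\<in>UNIV. (cmod (cinner (U j) x))^2)"
  using eig_norm[OF on, of "mat 1" "\<lambda>_. 1" x] by (simp add: matrix_vector_mul_lid)

lemma inner_sgn: "inner (z::complex) (sgn z) = cmod z"
  by (cases "z = 0") (simp_all add: sgn_div_norm power2_norm_eq_inner[symmetric] power2_eq_square)

lemma sum_smult_left: "(\<Sum>i\<in>S. f i *s u) = (sum f S) *s (u::complex^'n)"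
  by (simp add: vec_eq_iff sum_component sum_distrib_right)

lemma summat_mv: "(sum M S) *v x = (\<Sum>i\<in>S. M i *v (x::complex^'n))"
proof (cases "finite S")
  case True then show ?thesis
    by (induction S rule: finite_induct) (auto simp: matrix_vector_mult_add_rdistrib)
qed simp

lemma scaleR_comp: "(r *\<^sub>R (x::complex^'n)) $ j = complex_of_real r * x $ j"
  unfolding vector_scaleR_component by (rule scaleR_conv_of_real)

lemma dual_weights:
  fixes lam :: "nat \<Rightarrow> 'n::finite \<Rightarrow> complex" and d :: real and k :: nat
  assumes d: "d > 0"
   and big: "\<And>\<alpha>. \<exists>j. d \<le> cmod (lam 0 j - (\<Sum>i=1..k. \<alpha> i * lam i j))"
  shows "\<exists>w::'n \<Rightarrow> real. (\<forall>j. 0 \<le> w j) \<and> sum w UNIV = 1 \<and>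
           (\<forall>\<alpha>. d \<le> (\<Sum>j\<in>UNIV. w j * cmod (lam 0 j - (\<Sum>i=1..k. \<alpha> i * lam i j))))"
proof -
  define b0 :: "complex^'n" where "b0 = (\<chi> j. lam 0 j)"
  define sv :: "(nat \<Rightarrow> complex) \<Rightarrow> complex^'n" where "sv \<alpha> = (\<chi> j. \<Sum>i=1..k. \<alpha> i * lam i j)" for \<alpha>
  define C where "C = {x::complex^'n. \<forall>j. cmod (x$j - b0$j) < d}"
  define T where "T = range sv"
  have mu_eq: "lam 0 j - (\<Sum>i=1..k. \<alpha> i * lam i j) = b0$j - sv \<alpha> $ j" for \<alpha> j
    by (simp add: b0_def sv_def)
  have convC: "convex C"
    unfolding convex_def
  proof (intro ballI allI impI)
    fix x y :: "complex^'n" and u v :: real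
    assume x: "x \<in> C" and y: "y \<in> C" and uv1: "0 \<le> u" and uv2: "0 \<le> v" and uv3: "u + v = 1"
    note uv = uv1 uv2 uv3
    have "cmod ((u *\<^sub>R x + v *\<^sub>R y)$j - b0$j) < d" for j
    proof -
      have "b0$j = u *\<^sub>R b0$j + v *\<^sub>R b0$j" using uv by (metis scaleR_add_left scaleR_one)
      then have "(u *\<^sub>R x + v *\<^sub>R y)$j - b0$j = u *\<^sub>R (x$j - b0$j) + v *\<^sub>R (y$j - b0$j)"
        by (simp add: algebra_simps)
      then have le: "cmod ((u *\<^sub>R x + v *\<^sub>R y)$j - b0$j) \<le> u * cmod (x$j - b0$j) + v * cmod (y$j - b0$j)"
        using uv norm_triangle_ineq[of "u *\<^sub>R (x$j - b0$j)" "v *\<^sub>R (y$j - b0$j)"] by simp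
      have xj: "cmod (x$j - b0$j) < d" and yj: "cmod (y$j - b0$j) < d" using x y by (auto simp: C_def)
      have "u * cmod (x$j - b0$j) + v * cmod (y$j - b0$j) < d"
      proof (cases "u = 0")
        case True then show ?thesis using uv yj by simp
      next
        case False
        then have "u * cmod (x$j - b0$j) < u * d" using uv xj by (simp add: mult_strict_left_mono)
        moreover have "v * cmod (y$j - b0$j) \<le> v * d" using uv yj by (simp add: mult_left_mono)
        ultimately show ?thesis using uv by (metis add_less_le_mono distrib_right mult_1)
      qed
      then show ?thesis using le by linarith
    qed
    then show "u *\<^sub>R x + v *\<^sub>R y \<in> C" by (simp add: C_def)
  qed
  have sv_comb: "u *\<^sub>R sv \<alpha> + v *\<^sub>R sv \<beta> = sv (\<lambda>i. of_real u * \<alpha> i + of_real v * \<beta> i)" for u v \<alpha> \<beta>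
    by (simp add: vec_eq_iff sv_def) (simp add: scaleR_conv_of_real sum_distrib_left distrib_left sum.distrib mult_ac)
  have convT: "convex T"
    unfolding convex_def T_def using sv_comb by blast
  have CT: "C \<inter> T = {}"
  proof (rule ccontr)
    assume "C \<inter> T \<noteq> {}"
    then obtain \<alpha> where "sv \<alpha> \<in> C" by (auto simp: T_def)
    then have "\<forall>j. cmod (b0$j - sv \<alpha> $ j) < d" by (auto simp: C_def norm_minus_commute)
    then show False using big[of \<alpha>] unfolding mu_eq by (auto simp: not_le[symmetric])
  qed
  have Cne: "C \<noteq> {}" using d by (auto simp: C_def intro!: exI[of _ b0])
  have Tne: "T \<noteq> {}" by (simp add: T_def)
  obtain a \<beta> where a: "a \<noteq> 0" "\<forall>x\<in>C. inner a x \<le> \<beta>" "\<forall>x\<in>T. inner a x \<ge> \<beta>"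
    using separating_hyperplane_sets[OF convC convT Cne Tne CT] by blast
  have sv_scale: "sv (\<lambda>i. of_real r * \<alpha> i) = r *\<^sub>R sv \<alpha>" for r \<alpha>
    by (simp add: vec_eq_iff sv_def) (simp add: scaleR_conv_of_real sum_distrib_left mult_ac)
  have a_sv: "inner a (sv \<alpha>) = 0" for \<alpha>
  proof (rule ccontr)
    assume ne: "inner a (sv \<alpha>) \<noteq> 0"
    define r where "r = (\<beta> - 1) / inner a (sv \<alpha>)"
    have "\<beta> \<le> inner a (sv (\<lambda>i. of_real r * \<alpha> i))" using a(3) by (auto simp: T_def)
    also have "\<dots> = r * inner a (sv \<alpha>)" by (simp add: sv_scale)
    also have "\<dots> = \<beta> - 1" using ne by (simp add: r_def)
    finally show False by simp
  qed
  have b0': "\<beta> \<le> 0" using a(3) a_sv[of "\<lambda>_. 0"] unfolding T_def by (metis rangeI)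
  define L where "L = (\<Sum>j\<in>UNIV. cmod (a$j))"
  obtain j0 where j0: "a$j0 \<noteq> 0" using a(1) by (auto simp: vec_eq_iff)
  have Lpos: "L > 0" unfolding L_def by (rule sum_pos2[of UNIV j0]) (use j0 in auto)
  define e :: "complex^'n" where "e = (\<chi> j. sgn (a$j))"
  have ae: "inner a e = L" by (simp add: inner_vec_def e_def inner_sgn L_def)
  have xr: "inner a b0 + r * L \<le> 0" if r: "0 \<le> r" "r < d" for r
  proof -
    have "cmod ((b0 + r *\<^sub>R e)$j - b0$j) < d" for j
    proof -
      have "cmod ((b0 + r *\<^sub>R e)$j - b0$j) = r * cmod (sgn (a$j))" using r by (simp add: e_def)
      also have "\<dots> \<le> r" using r by (simp add: norm_sgn)
      finally show ?thesis using r by linarith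
    qed
    then have "b0 + r *\<^sub>R e \<in> C" by (simp add: C_def)
    then have "inner a (b0 + r *\<^sub>R e) \<le> \<beta>" using a(2) by blast
    then show ?thesis using b0' by (simp add: inner_add_right ae)
  qed
  have "d \<le> - inner a b0 / L"
  proof (rule dense_le_bounded[of 0 d])
    show "0 < d" by (rule d)
  next
    fix w assume "0 < w" "w < d"
    then have "inner a b0 + w * L \<le> 0" using xr by simp
    then show "w \<le> - inner a b0 / L" using Lpos by (simp add: field_simps)
  qed
  then have key: "d * L \<le> - inner a b0" using Lpos by (simp add: field_simps)
  define w where "w j = cmod (a$j) / L" for j
  show ?thesis
  proof (intro exI[of _ w] conjI allI)
    show "0 \<le> w j" for j using Lpos by (simp add: w_def)
    show "sum w UNIV = 1" using Lpos by (simp add: w_def sum_divide_distrib[symmetric] L_def)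
    fix \<alpha>
    have "d * L \<le> - inner a (b0 - sv \<alpha>)" using key a_sv[of \<alpha>] by (simp add: inner_diff_right)
    also have "\<dots> = (\<Sum>j\<in>UNIV. - inner (a$j) (b0$j - sv \<alpha> $ j))" by (simp add: inner_vec_def sum_negf)
    also have "\<dots> \<le> (\<Sum>j\<in>UNIV. cmod (a$j) * cmod (b0$j - sv \<alpha> $ j))"
    proof (rule sum_mono)
      fix j
      show "- inner (a$j) (b0$j - sv \<alpha> $ j) \<le> cmod (a$j) * cmod (b0$j - sv \<alpha> $ j)"
        using Cauchy_Schwarz_ineq2[of "a$j" "b0$j - sv \<alpha> $ j"] by linarith
    qed
    finally have "d * L \<le> (\<Sum>j\<in>UNIV. cmod (a$j) * cmod (b0$j - sv \<alpha> $ j))" .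
    moreover have "(\<Sum>j\<in>UNIV. w j * cmod (b0$j - sv \<alpha> $ j)) = (\<Sum>j\<in>UNIV. cmod (a$j) * cmod (b0$j - sv \<alpha> $ j)) / L"
      by (simp add: w_def sum_divide_distrib)
    ultimately show "d \<le> (\<Sum>j\<in>UNIV. w j * cmod (lam 0 j - (\<Sum>i=1..k. \<alpha> i * lam i j)))"
      unfolding mu_eq using Lpos by (simp add: pos_le_divide_eq mult.commute)
  qed
qed

theorem mainTheorem3:
  fixes A :: "nat \<Rightarrow> complex ^'n ^'n" and k :: nat
  assumes normal: "\<And>i. i \<le> k \<Longrightarrow> normal_matrix (A i)"
    and commute: "\<And>i j. i \<le> k \<Longrightarrow> j \<le> k \<Longrightarrow> A i ** A j = A j ** A i"
  shows "(SUP v \<in> {v :: complex ^'n. norm v = 1}.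
            INF \<alpha> :: nat \<Rightarrow> complex. norm (A 0 *v v - (\<Sum>i = 1..k. \<alpha> i *s (A i *v v))))
         = (INF \<alpha> :: nat \<Rightarrow> complex. spec_norm (A 0 - (\<Sum>i = 1..k. mat (\<alpha> i) ** A i)))"
proof -
  obtain U :: "'n \<Rightarrow> complex^'n" where on: "\<forall>i j. cinner (U i) (U j) = (if i = j then 1 else 0)"
    and ev0: "\<forall>j. \<forall>i\<le>k. \<exists>l. A i *v U j = l *s U j"
    using onb_exists[where A=A and k=k, OF normal commute] by blast
  define lam where "lam i j = (SOME l. A i *v U j = l *s U j)" for i j
  have lam: "A i *v U j = lam i j *s U j" if "i \<le> k" for i j
    unfolding lam_def by (rule someI_ex) (use ev0 that in blast)
  define N where "N \<alpha> = A 0 - (\<Sum>i = 1..k. mat (\<alpha> i) ** A i)" for \<alpha> :: "nat \<Rightarrow> complex"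
  define mu where "mu \<alpha> j = lam 0 j - (\<Sum>i = 1..k. \<alpha> i * lam i j)" for \<alpha> :: "nat \<Rightarrow> complex" and j
  have Nv: "N \<alpha> *v x = A 0 *v x - (\<Sum>i = 1..k. \<alpha> i *s (A i *v x))" for \<alpha> x
    by (simp add: N_def matrix_vector_mult_diff_rdistrib summat_mv matrix_vector_mul_assoc[symmetric] mat_mv)
  have NU: "N \<alpha> *v U j = mu \<alpha> j *s U j" for \<alpha> j
  proof -
    have "N \<alpha> *v U j = lam 0 j *s U j - (\<Sum>i = 1..k. (\<alpha> i * lam i j) *s U j)"
      unfolding Nv by (simp add: lam vector_smult_assoc)
    also have "\<dots> = mu \<alpha> j *s U j" by (simp add: sum_smult_left mu_def vector_sub_rdistrib)
    finally show ?thesis .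
  qed
  have bl: "bounded_linear ((*v) (N \<alpha>))" for \<alpha> by simp
  have g_le: "norm (N \<alpha> *v v) \<le> spec_norm (N \<alpha>) * norm v" for \<alpha> v
    unfolding spec_norm_def using onorm[OF bl] by simp
  have sn0: "0 \<le> spec_norm (N \<alpha>)" for \<alpha> unfolding spec_norm_def by (rule onorm_pos_le[OF bl])
  have sn_mu: "\<exists>j. spec_norm (N \<alpha>) \<le> cmod (mu \<alpha> j)" for \<alpha>
  proof -
    define b where "b = Max (range (\<lambda>j. cmod (mu \<alpha> j)))"
    have "b \<in> range (\<lambda>j. cmod (mu \<alpha> j))" unfolding b_def by (rule Max_in) auto
    then obtain j where bj: "b = cmod (mu \<alpha> j)" by blast
    have bge: "cmod (mu \<alpha> i) \<le> b" for i unfolding b_def by (rule Max_ge) auto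
    have b0: "0 \<le> b" using bj by simp
    have "norm (N \<alpha> *v x) \<le> b * norm x" for x
    proof -
      have "(norm (N \<alpha> *v x))^2 = (\<Sum>j\<in>UNIV. (cmod (cinner (U j) x))^2 * (cmod (mu \<alpha> j))^2)"
        by (rule eig_norm[OF on NU])
      also have "\<dots> \<le> (\<Sum>j\<in>UNIV. (cmod (cinner (U j) x))^2 * b^2)"
      proof (rule sum_mono)
        fix j
        have "(cmod (mu \<alpha> j))^2 \<le> b^2" by (rule power_mono[OF bge]) simp
        then show "(cmod (cinner (U j) x))^2 * (cmod (mu \<alpha> j))^2 \<le> (cmod (cinner (U j) x))^2 * b^2"
          by (rule mult_left_mono) simp
      qed
      also have "\<dots> = (b * norm x)^2"
        by (simp add: norm_expand[OF on] sum_distrib_left power_mult_distrib mult.commute)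
      finally have "(norm (N \<alpha> *v x))^2 \<le> (b * norm x)^2" .
      then show ?thesis by (rule power2_le_imp_le) (simp add: b0)
    qed
    then have "spec_norm (N \<alpha>) \<le> b" unfolding spec_norm_def by (rule onorm_le)
    then show ?thesis using bj by blast
  qed
  define S where "S = {v :: complex ^'n. norm v = 1}"
  define h where "h v = (INF \<alpha>. norm (N \<alpha> *v v))" for v
  define d where "d = (INF \<alpha>. spec_norm (N \<alpha>))"
  have bddb: "bdd_below (range (\<lambda>\<alpha>. norm (N \<alpha> *v v)))" for v
    by (rule bdd_belowI[of _ 0]) auto
  have h_le: "h v \<le> d" if "norm v = 1" for v
    unfolding h_def d_def
  proof (rule cINF_greatest)
    fix \<alpha>
    have "(INF \<alpha>. norm (N \<alpha> *v v)) \<le> norm (N \<alpha> *v v)" by (rule cINF_lower[OF bddb]) simp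
    also have "\<dots> \<le> spec_norm (N \<alpha>)" using g_le[of \<alpha> v] that by simp
    finally show "(INF \<alpha>. norm (N \<alpha> *v v)) \<le> spec_norm (N \<alpha>)" .
  qed simp
  have d0: "0 \<le> d" unfolding d_def by (rule cINF_greatest) (simp_all add: sn0)
  have dle: "d \<le> spec_norm (N \<alpha>)" for \<alpha>
    unfolding d_def by (rule cINF_lower) (auto intro: bdd_belowI[of _ 0] simp: sn0)
  obtain j0 :: 'n where True by blast
  have nU: "norm (U j) = 1" for j
  proof -
    have "complex_of_real ((norm (U j))^2) = 1" using on cinner_self[of "U j"] by metis
    then have "(norm (U j))^2 = 1" by (metis of_real_eq_1_iff)
    then show ?thesis using norm_ge_zero[of "U j"] by (simp add: power2_eq_1_iff)
  qed
  have Sne: "S \<noteq> {}" using nU by (auto simp: S_def)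
  have bdda: "bdd_above (h ` S)" by (rule bdd_aboveI[of _ d]) (auto simp: S_def h_le)
  have up: "(SUP v\<in>S. h v) \<le> d" by (rule cSUP_least[OF Sne]) (use h_le in \<open>auto simp: S_def\<close>)
  have "\<exists>v\<in>S. d \<le> h v"
  proof (cases "d = 0")
    case True
    have "0 \<le> h (U j0)" unfolding h_def by (rule cINF_greatest) auto
    then show ?thesis using True nU by (auto simp: S_def)
  next
    case False
    then have dpos: "d > 0" using d0 by simp
    have big: "\<exists>j. d \<le> cmod (lam 0 j - (\<Sum>i=1..k. \<alpha> i * lam i j))" for \<alpha>
      using sn_mu[of \<alpha>] dle[of \<alpha>] unfolding mu_def by (meson order_trans)
    obtain w :: "'n \<Rightarrow> real" where w: "\<forall>j. 0 \<le> w j" "sum w UNIV = 1"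
      "\<forall>\<alpha>. d \<le> (\<Sum>j\<in>UNIV. w j * cmod (lam 0 j - (\<Sum>i=1..k. \<alpha> i * lam i j)))"
      using dual_weights[OF dpos big] by blast
    define v where "v = (\<Sum>j\<in>UNIV. complex_of_real (sqrt (w j)) *s U j)"
    have cv: "cinner (U j) v = complex_of_real (sqrt (w j))" for j
      unfolding v_def by (rule parseval(1)[OF on])
    have "(norm v)^2 = (\<Sum>j\<in>UNIV. (cmod (complex_of_real (sqrt (w j))))^2)"
      unfolding v_def by (rule parseval(2)[OF on])
    also have "\<dots> = 1" using w(1,2) by simp
    finally have "(norm v)^2 = 1" .
    then have nv: "norm v = 1" using norm_ge_zero[of v] by (simp add: power2_eq_1_iff)
    have "d \<le> norm (N \<alpha> *v v)" for \<alpha>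
    proof -
      define m where "m j = cmod (mu \<alpha> j)" for j
      have wm: "d \<le> (\<Sum>j\<in>UNIV. w j * m j)" using w(3) by (simp add: m_def mu_def)
      have sq: "(norm (N \<alpha> *v v))^2 = (\<Sum>j\<in>UNIV. w j * (m j)^2)"
        using eig_norm[OF on NU, of \<alpha> v] w(1) by (simp add: cv m_def)
      have "0 \<le> (\<Sum>j\<in>UNIV. w j * (m j - d)^2)" using w(1) by (simp add: sum_nonneg)
      also have "\<dots> = (\<Sum>j\<in>UNIV. w j * (m j)^2 - (2 * d) * (w j * m j) + d^2 * w j)"
        by (rule sum.cong) (simp_all add: power2_diff algebra_simps)
      also have "\<dots> = (\<Sum>j\<in>UNIV. w j * (m j)^2) - 2 * d * (\<Sum>j\<in>UNIV. w j * m j) + d^2 * sum w UNIV"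
        by (simp only: sum.distrib sum_subtractf sum_distrib_left[symmetric])
      finally have ex: "0 \<le> (\<Sum>j\<in>UNIV. w j * (m j)^2) - 2 * d * (\<Sum>j\<in>UNIV. w j * m j) + d^2 * sum w UNIV" .
      have "d * d \<le> d * (\<Sum>j\<in>UNIV. w j * m j)" using wm d0 by (rule mult_left_mono)
      moreover have ex': "0 \<le> (\<Sum>j\<in>UNIV. w j * (m j)^2) - 2 * (d * (\<Sum>j\<in>UNIV. w j * m j)) + d * d"
        using ex w(2) by (simp add: power2_eq_square mult.assoc)
      ultimately have "d^2 \<le> (\<Sum>j\<in>UNIV. w j * (m j)^2)" unfolding power2_eq_square[of d] by linarith
      then have "d^2 \<le> (norm (N \<alpha> *v v))^2" unfolding sq .
      then show ?thesis by (rule power2_le_imp_le) (rule norm_ge_zero)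
    qed
    then have "d \<le> h v" unfolding h_def by (intro cINF_greatest) auto
    then show ?thesis using nv by (auto simp: S_def)
  qed
  then obtain v where "v \<in> S" "d \<le> h v" by blast
  then have low: "d \<le> (SUP v\<in>S. h v)" using cSUP_upper2[OF bdda] by blast
  have main: "(SUP v\<in>S. h v) = d" using up low by simp
  have main2: "(SUP v\<in>S. INF \<alpha>. norm (A 0 *v v - (\<Sum>i = 1..k. \<alpha> i *s (A i *v v)))) = d"
    using main unfolding h_def Nv .
  show ?thesis using main2 unfolding S_def d_def N_def .
qed

end
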